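(* Let $T$ be a tree and $\mathcal{M}$ a $2$-matching of $T^\ell$. Then \[ d(\mathcal{M},X)=x_{\ell(\mathcal{M})}+\text{(terms of lower total degree)}, \] where $x_{\ell(\mathcal{M})}=\prod_{uu\in\ell(\mathcal{M})}x_u$.
   Context: A tree is a simple connected graph without cycles. $L(T,X)$ is the matrix indexed by $V(T)$ with diagonal entries $x_u$ and off-diagonal entry $-1$ for adjacent vertices and $0$ otherwise. A $2$-matching of a graph (loops allowed) is a set $\mathcal{M}$ of edges such that every vertex is incident to at most two edges of $\mathcal{M}$ (a loop counts twice for incidence but as one edge). $T^\ell$ is $T$ with a loop added at each vertex; $\ell(\mathcal{M})$ is the set of loops in $\mathcal{M}$. Components of $\mathcal{M}$ are single loops or paths of $T$; orient each path $w_1\cdots w_{m+1}$ (either direction), with heads $\{w_2,\dots,w_{m+1}\}$ and tails $\{w_1,\dots,w_m\}$, a loop $uu$ having head and tail $u$; $h(\mathcal{M})$, $t(\mathcal{M})$ are the unions of heads, resp. tails, over all components. $d(\mathcal{M},X)=\pm\det L(T,X)[h(\mathcal{M}),t(\mathcal{M})]$ (rows $h(\mathcal{M})$, columns $t(\mathcal{M})$), the sign chosen so that the leading coefficient is positive. *)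

theory Defs
  imports "HOL-Library.Poly_Mapping" "Jordan_Normal_Form.Determinant"
begin

(* Multivariate polynomials in variables x_u (u a vertex) with integer coefficients:
  monomials are finitely supported exponent maps 'a => nat, polynomials are
  finitely supported maps monomial => int. *)
type_synonym 'a mpoly = "('a \<Rightarrow>\<^sub>0 nat) \<Rightarrow>\<^sub>0 int"

definition var :: "'a \<Rightarrow> 'a mpoly" where
  "var u = Poly_Mapping.single (Poly_Mapping.single u 1) 1"

definition mono_deg :: "('a \<Rightarrow>\<^sub>0 nat) \<Rightarrow> nat" where
  "mono_deg m = sum (Poly_Mapping.lookup m) (Poly_Mapping.keys m)"

definition var_prod :: "'a set \<Rightarrow> 'a mpoly" where
  "var_prod S = (\<Prod>u\<in>S. var u)"

definition lower_deg :: "'a mpoly \<Rightarrow> nat \<Rightarrow> bool" where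
  "lower_deg p d \<longleftrightarrow> (\<forall>m\<in>Poly_Mapping.keys p. mono_deg m < d)"

definition simple_graph :: "'a set \<Rightarrow> 'a set set \<Rightarrow> bool" where
  "simple_graph V E \<longleftrightarrow> finite V \<and> (\<forall>e\<in>E. e \<subseteq> V \<and> card e = 2)"

definition connected_graph :: "'a set \<Rightarrow> 'a set set \<Rightarrow> bool" where
  "connected_graph V E \<longleftrightarrow> (\<forall>u\<in>V. \<forall>v\<in>V. (u, v) \<in> {(a, b). {a, b} \<in> E}\<^sup>*)"

definition acyclic_graph :: "'a set set \<Rightarrow> bool" where
  "acyclic_graph E \<longleftrightarrow> \<not> (\<exists>cs. length cs \<ge> 3 \<and> distinct cs \<and>
      (\<forall>i < length cs. {cs ! i, cs ! ((i + 1) mod length cs)} \<in> E))"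

definition is_tree :: "'a set \<Rightarrow> 'a set set \<Rightarrow> bool" where
  "is_tree V E \<longleftrightarrow> simple_graph V E \<and> connected_graph V E \<and> acyclic_graph E"

text \<open>Edges of T^l: the edges of T together with a loop {u} at every vertex u.\<close>
definition loop_edges :: "'a set \<Rightarrow> 'a set set" where
  "loop_edges V = (\<lambda>u. {u}) ` V"

definition two_matching :: "'a set \<Rightarrow> 'a set set \<Rightarrow> 'a set set \<Rightarrow> bool" where
  "two_matching V E M \<longleftrightarrow> M \<subseteq> E \<union> loop_edges V \<and>
     (\<forall>v\<in>V. card {e \<in> M \<inter> E. v \<in> e} + (if {v} \<in> M then 2 else 0) \<le> (2::nat))"

text \<open>l(M), as the set of vertices carrying a loop in M\<close>
definition loops_of :: "'a set \<Rightarrow> 'a set set \<Rightarrow> 'a set" where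
  "loops_of V M = {u \<in> V. {u} \<in> M}"

text \<open>An orientation of the path components of M: every non-loop edge of M gets exactly
  one direction, and every vertex has at most one outgoing and at most one incoming
  oriented edge (i.e. each path is oriented consistently from one end to the other).\<close>
definition path_orientation :: "'a set set \<Rightarrow> 'a set set \<Rightarrow> ('a \<times> 'a) set \<Rightarrow> bool" where
  "path_orientation E M D \<longleftrightarrow>
     (\<forall>(a, b)\<in>D. {a, b} \<in> M \<inter> E) \<and>
     (\<forall>a b. {a, b} \<in> M \<inter> E \<longrightarrow> ((a, b) \<in> D \<longleftrightarrow> (b, a) \<notin> D)) \<and>
     (\<forall>a b c. (a, b) \<in> D \<and> (a, c) \<in> D \<longrightarrow> b = c) \<and>
     (\<forall>a b c. (b, a) \<in> D \<and> (c, a) \<in> D \<longrightarrow> b = c)"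

definition heads :: "'a set \<Rightarrow> 'a set set \<Rightarrow> ('a \<times> 'a) set \<Rightarrow> 'a set" where
  "heads V M D = snd ` D \<union> loops_of V M"

definition tails :: "'a set \<Rightarrow> 'a set set \<Rightarrow> ('a \<times> 'a) set \<Rightarrow> 'a set" where
  "tails V M D = fst ` D \<union> loops_of V M"

definition Lmat :: "'a set set \<Rightarrow> 'a \<Rightarrow> 'a \<Rightarrow> 'a mpoly" where
  "Lmat E u v = (if u = v then var u else if {u, v} \<in> E then -1 else 0)"

text \<open>det L(T,X)[R,C], rows and columns listed in increasing order (the sign is
  irrelevant, since the statement is up to sign).\<close>
definition sub_det :: "'a::linorder set set \<Rightarrow> 'a set \<Rightarrow> 'a set \<Rightarrow> 'a mpoly" where
  "sub_det E R C = det (mat (card R) (card C)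
      (\<lambda>(i, j). Lmat E (sorted_list_of_set R ! i) (sorted_list_of_set C ! j)))"

end

theory Submission
  imports Defs
begin


lemma lower_deg_0[simp]: "lower_deg 0 d" by (simp add: lower_deg_def)
lemma lower_deg_add: "lower_deg p d \<Longrightarrow> lower_deg q d \<Longrightarrow> lower_deg (p + q) d"
  unfolding lower_deg_def using Poly_Mapping.keys_add[of p q] by blast
lemma lower_deg_uminus: "lower_deg p d \<Longrightarrow> lower_deg (- p) d"
  unfolding lower_deg_def by simp
lemma lower_deg_sum: "(\<And>x. x \<in> A \<Longrightarrow> lower_deg (f x) d) \<Longrightarrow> lower_deg (sum f A) d"
proof (induction A rule: infinite_finite_induct)
  case (insert x F)
  then show ?case by (simp add: lower_deg_add)
qed simp_all

definition mset_of :: "'a set \<Rightarrow> ('a \<Rightarrow>\<^sub>0 nat)" where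
  "mset_of F = (\<Sum>u\<in>F. Poly_Mapping.single u 1)"

lemma var_prod_single: "finite F \<Longrightarrow> var_prod F = Poly_Mapping.single (mset_of F) 1"
proof (induction F rule: finite_induct)
  case empty
  then show ?case unfolding var_prod_def mset_of_def by (simp add: Poly_Mapping.one_poly_mapping.abs_eq)
next
  case (insert x F)
  have "var_prod (insert x F) = var x * var_prod F" unfolding var_prod_def using insert(1,2) by simp
  also have "\<dots> = Poly_Mapping.single (Poly_Mapping.single x 1 + mset_of F) 1"
    unfolding insert(3) var_def Poly_Mapping.mult_single by simp
  also have "Poly_Mapping.single x 1 + mset_of F = mset_of (insert x F)"
    unfolding mset_of_def using insert(1,2) by simp
  finally show ?case .
qed

lemma lookup_mset_of: "finite F \<Longrightarrow> Poly_Mapping.lookup (mset_of F) v = (if v \<in> F then 1 else 0)"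
  unfolding mset_of_def by (induction F rule: finite_induct) (auto simp: Poly_Mapping.lookup_add Poly_Mapping.lookup_single when_def)

lemma keys_mset_of: "finite F \<Longrightarrow> Poly_Mapping.keys (mset_of F) = F"
  by (auto simp: Poly_Mapping.in_keys_iff lookup_mset_of split: if_splits)

lemma mono_deg_mset_of: "finite F \<Longrightarrow> mono_deg (mset_of F) = card F"
  unfolding mono_deg_def by (simp add: keys_mset_of lookup_mset_of)

lemma lower_deg_var_prod: "finite F \<Longrightarrow> card F < d \<Longrightarrow> lower_deg (var_prod F) d"
  unfolding lower_deg_def by (simp add: var_prod_single mono_deg_mset_of)



definition walk :: "('a \<Rightarrow> 'a \<Rightarrow> bool) \<Rightarrow> 'a list \<Rightarrow> bool" where
  "walk r xs \<longleftrightarrow> (\<forall>i. Suc i < length xs \<longrightarrow> r (xs!i) (xs!Suc i))"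

lemma rtranclp_distinct_walk:
  assumes "r\<^sup>*\<^sup>* x y"
  shows "\<exists>xs. xs \<noteq> [] \<and> hd xs = x \<and> last xs = y \<and> distinct xs \<and> walk r xs"
  using assms
proof (induction rule: converse_rtranclp_induct)
  case base
  show ?case by (rule exI[of _ "[y]"]) (simp add: walk_def)
next
  case (step x z)
  then obtain xs where xs: "xs \<noteq> []" "hd xs = z" "last xs = y" "distinct xs" "walk r xs" by blast
  show ?case
  proof (cases "x \<in> set xs")
    case False
    have "walk r (x#xs)" unfolding walk_def
    proof (intro allI impI)
      fix i assume i: "Suc i < length (x#xs)"
      show "r ((x#xs)!i) ((x#xs)!Suc i)"
      proof (cases i)
        case 0
        then show ?thesis using step(1) xs(1,2) by (simp add: hd_conv_nth)
      next
        case (Suc j)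
        then show ?thesis using xs(5) i unfolding walk_def by simp
      qed
    qed
    then show ?thesis using False xs by (intro exI[of _ "x#xs"]) simp
  next
    case True
    then obtain ys zs where sp: "xs = ys @ x # zs" by (meson split_list)
    have "walk r (x#zs)" unfolding walk_def
    proof (intro allI impI)
      fix i assume i: "Suc i < length (x#zs)"
      have "Suc (length ys + i) < length xs" using i sp by simp
      then have "r (xs!(length ys + i)) (xs!Suc (length ys + i))"
        using xs(5) unfolding walk_def by blast
      moreover have "xs!(length ys + i) = (x#zs)!i" using sp by (simp add: nth_append_length_plus)
      moreover have "xs!Suc (length ys + i) = (x#zs)!Suc i" using sp
        by (metis add_Suc_right nth_append_length_plus)
      ultimately show "r ((x#zs)!i) ((x#zs)!Suc i)" by simp
    qed
    moreover have "last (x#zs) = y" using xs(3) sp by simp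
    moreover have "distinct (x#zs)" using xs(4) sp by simp
    ultimately show ?thesis by (intro exI[of _ "x#zs"]) simp
  qed
qed

lemma tree_cut:
  assumes tree: "is_tree V E" and ab: "{a,b} \<in> E"
  shows "\<exists>S. b \<in> S \<and> a \<notin> S \<and> (\<forall>x y. {x,y} \<in> E \<longrightarrow> x \<in> S \<longrightarrow> y \<notin> S \<longrightarrow> x = b \<and> y = a)"
proof -
  have sg: "\<forall>e\<in>E. e \<subseteq> V \<and> card e = 2" using tree unfolding is_tree_def simple_graph_def by simp
  have acyc: "acyclic_graph E" using tree unfolding is_tree_def by simp
  have "card {a,b} = 2" using sg ab by blast
  then have ne: "a \<noteq> b" by (cases "a = b") auto
  define r where "r = (\<lambda>x y. {x,y} \<in> E \<and> {x,y} \<noteq> {a,b})"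
  define S where "S = {x. r\<^sup>*\<^sup>* b x}"
  have "a \<notin> S"
  proof
    assume "a \<in> S"
    then have rba: "r\<^sup>*\<^sup>* b a" unfolding S_def by simp
    obtain cs where cs: "cs \<noteq> []" "hd cs = b" "last cs = a" "distinct cs" "walk r cs"
      using rtranclp_distinct_walk[OF rba] by (elim exE conjE) simp
    obtain ys where ys: "cs = b # ys" using cs(1,2) by (cases cs) auto
    have "ys \<noteq> []" using ys cs(3) ne by auto
    then obtain y ys' where ys': "ys = y # ys'" by (cases ys) auto
    have "ys' \<noteq> []"
    proof
      assume "ys' = []"
      then have "cs = [b, a]" using ys ys' cs(3) by simp
      then have "r (cs!0) (cs!Suc 0)" using cs(5) unfolding walk_def by simp
      then have "r b a" using \<open>cs = [b, a]\<close> by simp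
      then show False unfolding r_def by (auto simp: insert_commute)
    qed
    then have len: "length cs \<ge> 3" using ys ys' by (cases ys') auto
    have "\<forall>i<length cs. {cs ! i, cs ! ((i + 1) mod length cs)} \<in> E"
    proof (intro allI impI)
      fix i assume i: "i < length cs"
      show "{cs ! i, cs ! ((i + 1) mod length cs)} \<in> E"
      proof (cases "Suc i < length cs")
        case True
        then have "(i+1) mod length cs = Suc i" by simp
        then show ?thesis using cs(5) True r_def unfolding walk_def by simp
      next
        case False
        then have "Suc i = length cs" using i by simp
        have "(i+1) mod length cs = 0" using \<open>Suc i = length cs\<close> by simp
        moreover have "cs ! i = a" using \<open>Suc i = length cs\<close> cs(1,3) by (metis diff_Suc_1 last_conv_nth)
        moreover have "cs ! 0 = b" using cs(1,2) by (metis hd_conv_nth)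
        ultimately show ?thesis using ab by (simp add: insert_commute)
      qed
    qed
    then have "\<exists>cs. length cs \<ge> 3 \<and> distinct cs \<and>
      (\<forall>i < length cs. {cs ! i, cs ! ((i + 1) mod length cs)} \<in> E)" using len cs(4) by (intro exI[of _ cs]) simp
    from acyc[unfolded acyclic_graph_def] this show False by (rule notE)
  qed
  moreover have "b \<in> S" unfolding S_def by simp
  moreover have "\<forall>x y. {x,y} \<in> E \<longrightarrow> x \<in> S \<longrightarrow> y \<notin> S \<longrightarrow> x = b \<and> y = a"
  proof (intro allI impI)
    fix x y assume xy: "{x,y} \<in> E" "x \<in> S" "y \<notin> S"
    have "{x,y} = {a,b}"
    proof (rule ccontr)
      assume "{x,y} \<noteq> {a,b}"
      then have "r x y" using xy r_def by simp
      then have "y \<in> S" using xy S_def by (simp add: rtranclp.rtrancl_into_rtrancl)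
      then show False using xy by simp
    qed
    then have "(x = a \<and> y = b) \<or> (x = b \<and> y = a)" by (simp add: doubleton_eq_iff)
    then show "x = b \<and> y = a" using xy(2,3) \<open>a \<notin> S\<close> \<open>b \<in> S\<close> by blast
  qed
  ultimately show ?thesis by (intro exI[of _ S]) simp
qed



lemma count_cut:
  fixes \<sigma> :: "'a \<Rightarrow> 'a"
  assumes fin: "finite H" and bij: "bij_betw \<sigma> H T"
    and adj: "\<forall>r\<in>H. \<sigma> r = r \<or> {r, \<sigma> r} \<in> E"
    and Sb: "b \<in> S" and Sa: "a \<notin> S" and Scut: "\<forall>x y. {x,y} \<in> E \<longrightarrow> x \<in> S \<longrightarrow> y \<notin> S \<longrightarrow> x = b \<and> y = a"
  shows "card (H \<inter> S) = card {r\<in>H\<inter>S. \<sigma> r \<in> S} + (if b \<in> H \<and> \<sigma> b = a then 1 else 0)"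
    and "card (T \<inter> S) = card {r\<in>H\<inter>S. \<sigma> r \<in> S} + (if a \<in> H \<and> \<sigma> a = b then 1 else 0)"
proof -
  define A1 where "A1 = {r\<in>H\<inter>S. \<sigma> r \<in> S}"
  define A2 where "A2 = {r\<in>H\<inter>S. \<sigma> r \<notin> S}"
  define B2 where "B2 = {r\<in>H-S. \<sigma> r \<in> S}"
  have A2: "A2 = (if b \<in> H \<and> \<sigma> b = a then {b} else {})"
  proof -
    have "r = b \<and> \<sigma> r = a" if r: "r \<in> A2" for r
    proof -
      have rH: "r \<in> H" "r \<in> S" "\<sigma> r \<notin> S" using r A2_def by auto
      then have "\<sigma> r \<noteq> r" by auto
      then have "{r, \<sigma> r} \<in> E" using adj rH by auto
      then show ?thesis using Scut rH by blast
    qed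
    moreover have "b \<in> A2" if "b \<in> H" "\<sigma> b = a" using that Sb Sa A2_def by simp
    moreover have "A2 \<subseteq> H" unfolding A2_def by auto
    ultimately show ?thesis by auto
  qed
  have B2: "B2 = (if a \<in> H \<and> \<sigma> a = b then {a} else {})"
  proof -
    have "r = a \<and> \<sigma> r = b" if r: "r \<in> B2" for r
    proof -
      have rH: "r \<in> H" "r \<notin> S" "\<sigma> r \<in> S" using r B2_def by auto
      then have "\<sigma> r \<noteq> r" by auto
      then have "{r, \<sigma> r} \<in> E" using adj rH by auto
      then have "{\<sigma> r, r} \<in> E" by (simp add: insert_commute)
      then show ?thesis using Scut rH by blast
    qed
    moreover have "a \<in> B2" if "a \<in> H" "\<sigma> a = b" using that Sb Sa B2_def by simp
    moreover have "B2 \<subseteq> H" unfolding B2_def by auto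
    ultimately show ?thesis by auto
  qed
  have "H \<inter> S = A1 \<union> A2" unfolding A1_def A2_def by auto
  moreover have "A1 \<inter> A2 = {}" unfolding A1_def A2_def by auto
  moreover have "finite A1" "finite A2" using fin unfolding A1_def A2_def by auto
  ultimately have "card (H \<inter> S) = card A1 + card A2" by (simp add: card_Un_disjoint)
  then show "card (H \<inter> S) = card {r\<in>H\<inter>S. \<sigma> r \<in> S} + (if b \<in> H \<and> \<sigma> b = a then 1 else 0)"
    unfolding A1_def[symmetric] A2 by simp
  have inj: "inj_on \<sigma> H" and img: "\<sigma> ` H = T" using bij by (auto simp: bij_betw_def)
  have "T \<inter> S = \<sigma> ` A1 \<union> \<sigma> ` B2" unfolding A1_def B2_def img[symmetric] by auto
  moreover have "\<sigma> ` A1 \<inter> \<sigma> ` B2 = {}"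
  proof -
    have "A1 \<inter> B2 = {}" "A1 \<subseteq> H" "B2 \<subseteq> H" unfolding A1_def B2_def by auto
    then show ?thesis using inj by (metis image_empty inj_on_image_Int)
  qed
  moreover have "finite A1" "finite B2" using fin unfolding A1_def B2_def by auto
  moreover have "card (\<sigma> ` A1) = card A1"
    by (rule card_image, rule inj_on_subset[OF inj]) (auto simp: A1_def)
  moreover have "card (\<sigma> ` B2) = card B2"
    by (rule card_image, rule inj_on_subset[OF inj]) (auto simp: B2_def)
  ultimately have "card (T \<inter> S) = card A1 + card B2" by (simp add: card_Un_disjoint)
  then show "card (T \<inter> S) = card {r\<in>H\<inter>S. \<sigma> r \<in> S} + (if a \<in> H \<and> \<sigma> a = b then 1 else 0)"
    unfolding A1_def[symmetric] B2 by simp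
qed

lemma key_arc:
  fixes \<sigma> \<sigma>0 :: "'a \<Rightarrow> 'a"
  assumes tree: "is_tree V E" and fin: "finite H"
    and bij0: "bij_betw \<sigma>0 H T" and adj0: "\<forall>r\<in>H. \<sigma>0 r = r \<or> {r, \<sigma>0 r} \<in> E"
    and bij: "bij_betw \<sigma> H T" and adj: "\<forall>r\<in>H. \<sigma> r = r \<or> {r, \<sigma> r} \<in> E"
    and ab: "{a,b} \<in> E" and b0: "b \<in> H" "\<sigma>0 b = a" and a0: "\<not> (a \<in> H \<and> \<sigma>0 a = b)"
  shows "\<sigma> b = a"
proof -
  obtain S where Sb: "b \<in> S" and Sa: "a \<notin> S"
    and Scut: "\<forall>x y. {x,y} \<in> E \<longrightarrow> x \<in> S \<longrightarrow> y \<notin> S \<longrightarrow> x = b \<and> y = a"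
    using tree_cut[OF tree ab] by blast
  note c0 = count_cut[OF fin bij0 adj0 Sb Sa Scut]
  note c = count_cut[OF fin bij adj Sb Sa Scut]
  from c0 c b0 a0 show ?thesis by (auto split: if_splits)
qed



locale lsetup =
  fixes V :: "'a::linorder set" and E :: "'a set set" and M :: "'a set set"
    and D :: "('a \<times> 'a) set"
  assumes tree: "is_tree V E"
    and tm: "two_matching V E M"
    and po: "path_orientation E M D"
begin

definition "L = loops_of V M"
definition "H = heads V M D"
definition "T = tails V M D"
definition "\<sigma>0 v = (if v \<in> L then v else (THE a. (a, v) \<in> D))"

lemma finV: "finite V" using tree unfolding is_tree_def simple_graph_def by simp
lemma Esub: "e \<in> E \<Longrightarrow> e \<subseteq> V \<and> card e = 2" using tree unfolding is_tree_def simple_graph_def by simp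
lemma finE: "finite E"
proof -
  have "E \<subseteq> Pow V" using Esub by auto
  then show ?thesis using finV by (meson finite_Pow_iff finite_subset)
qed

lemma Darc: assumes "(a,b) \<in> D" shows "{a,b} \<in> M" "{a,b} \<in> E" "a \<noteq> b" "a \<in> V" "b \<in> V"
proof -
  have "{a,b} \<in> M \<inter> E" using po assms unfolding path_orientation_def by blast
  then show "{a,b} \<in> M" "{a,b} \<in> E" by auto
  then have "card {a,b} = 2" "{a,b} \<subseteq> V" using Esub by auto
  then show "a \<noteq> b" "a \<in> V" "b \<in> V" by (cases "a = b"; simp)+
qed

lemma finD: "finite D"
proof -
  have "D \<subseteq> V \<times> V" using Darc by auto
  then show ?thesis using finV by (meson finite_SigmaI finite_subset)
qed

lemma out_unique: "(a,b) \<in> D \<Longrightarrow> (a,c) \<in> D \<Longrightarrow> b = c"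
  using po unfolding path_orientation_def by blast
lemma in_unique: "(b,a) \<in> D \<Longrightarrow> (c,a) \<in> D \<Longrightarrow> b = c"
  using po unfolding path_orientation_def by blast
lemma no_rev: "(a,b) \<in> D \<Longrightarrow> (b,a) \<notin> D"
proof -
  assume ab: "(a,b) \<in> D"
  then have "{a,b} \<in> M \<inter> E" using Darc by auto
  then have "(a, b) \<in> D \<longleftrightarrow> (b, a) \<notin> D" using po unfolding path_orientation_def by blast
  then show ?thesis using ab by simp
qed

lemma loop_free: assumes u: "u \<in> L" and ab: "(a,b) \<in> D" shows "u \<noteq> a" "u \<noteq> b"
proof -
  have uV: "u \<in> V" "{u} \<in> M" using u unfolding L_def loops_of_def by auto
  have "card {e \<in> M \<inter> E. u \<in> e} + (if {u} \<in> M then 2 else 0) \<le> (2::nat)"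
    using tm uV(1) unfolding two_matching_def by blast
  then have "card {e \<in> M \<inter> E. u \<in> e} = 0" using uV by simp
  moreover have "finite {e \<in> M \<inter> E. u \<in> e}" using finE by simp
  ultimately have emp: "{e \<in> M \<inter> E. u \<in> e} = {}" by simp
  have "{a,b} \<in> M \<inter> E" using Darc[OF ab] by auto
  then show "u \<noteq> a" "u \<noteq> b" using emp by auto
qed

lemma H_eq: "H = snd ` D \<union> L" unfolding H_def heads_def L_def by simp
lemma T_eq: "T = fst ` D \<union> L" unfolding T_def tails_def L_def by simp
lemma finL: "finite L" unfolding L_def loops_of_def using finV by simp
lemma finH: "finite H" using H_eq finD finL by simp

lemma sigma0_arc: assumes ab: "(a,b) \<in> D" shows "\<sigma>0 b = a"
proof -
  have "b \<notin> L" using loop_free ab by blast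
  moreover have "(THE a. (a, b) \<in> D) = a" using ab in_unique by blast
  ultimately show ?thesis unfolding \<sigma>0_def by simp
qed

lemma sigma0_L: "v \<in> L \<Longrightarrow> \<sigma>0 v = v" unfolding \<sigma>0_def by simp

lemma bij0: "bij_betw \<sigma>0 H T"
  unfolding bij_betw_def
proof
  show "inj_on \<sigma>0 H"
  proof (rule inj_onI)
    fix x y assume x: "x \<in> H" and y: "y \<in> H" and eq: "\<sigma>0 x = \<sigma>0 y"
    show "x = y"
    proof (cases "x \<in> L")
      case xL: True
      show ?thesis
      proof (cases "y \<in> L")
        case True then show ?thesis using xL eq sigma0_L by simp
      next
        case False
        then obtain a where ay: "(a,y) \<in> D" using y H_eq by force
        then have "\<sigma>0 y = a" by (rule sigma0_arc)
        then have "x = a" using eq sigma0_L xL by simp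
        then show ?thesis using loop_free[OF xL ay] by simp
      qed
    next
      case xL: False
      then obtain a where ax: "(a,x) \<in> D" using x H_eq by force
      then have sx: "\<sigma>0 x = a" by (rule sigma0_arc)
      show ?thesis
      proof (cases "y \<in> L")
        case True
        then have "y = a" using eq sx sigma0_L by simp
        then show ?thesis using loop_free[OF True ax] by simp
      next
        case False
        then obtain c where cy: "(c,y) \<in> D" using y H_eq by force
        then have "c = a" using sigma0_arc eq sx by simp
        then show ?thesis using out_unique ax cy by blast
      qed
    qed
  qed
  show "\<sigma>0 ` H = T"
  proof
    show "\<sigma>0 ` H \<subseteq> T"
    proof
      fix z assume "z \<in> \<sigma>0 ` H"
      then obtain x where x: "x \<in> H" "z = \<sigma>0 x" by blast
      show "z \<in> T"
      proof (cases "x \<in> L")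
        case True then show ?thesis using x sigma0_L T_eq by simp
      next
        case False
        then obtain a where ax: "(a,x) \<in> D" using x H_eq by force
        then show ?thesis using x sigma0_arc T_eq by force
      qed
    qed
    show "T \<subseteq> \<sigma>0 ` H"
    proof
      fix z assume z: "z \<in> T"
      show "z \<in> \<sigma>0 ` H"
      proof (cases "z \<in> L")
        case True then show ?thesis using H_eq sigma0_L by force
      next
        case False
        then obtain b where zb: "(z,b) \<in> D" using z T_eq by force
        then have "b \<in> H" "\<sigma>0 b = z" using H_eq sigma0_arc by force+
        then show ?thesis by force
      qed
    qed
  qed
qed

lemma adj0: "\<forall>r\<in>H. \<sigma>0 r = r \<or> {r, \<sigma>0 r} \<in> E"
proof
  fix r assume r: "r \<in> H"
  show "\<sigma>0 r = r \<or> {r, \<sigma>0 r} \<in> E"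
  proof (cases "r \<in> L")
    case True then show ?thesis using sigma0_L by simp
  next
    case False
    then obtain a where ar: "(a,r) \<in> D" using r H_eq by force
    then show ?thesis using sigma0_arc Darc(2) by (simp add: insert_commute)
  qed
qed

lemma not_back: assumes ab: "(a,b) \<in> D" shows "\<not> (a \<in> H \<and> \<sigma>0 a = b)"
proof
  assume a: "a \<in> H \<and> \<sigma>0 a = b"
  show False
  proof (cases "a \<in> L")
    case True then show False using loop_free[OF True ab] by simp
  next
    case False
    then obtain c where ca: "(c,a) \<in> D" using a H_eq by force
    then have "c = b" using sigma0_arc a by simp
    then show False using ca no_rev ab by simp
  qed
qed

lemma good_sigma:
  assumes bij: "bij_betw \<sigma> H T" and adj: "\<forall>r\<in>H. \<sigma> r = r \<or> {r, \<sigma> r} \<in> E"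
  shows "{v\<in>H. \<sigma> v = v} \<subseteq> L" and "{v\<in>H. \<sigma> v = v} = L \<Longrightarrow> \<forall>v\<in>H. \<sigma> v = \<sigma>0 v"
proof -
  have arcs: "\<sigma> b = a" if ab: "(a,b) \<in> D" for a b
  proof (rule key_arc[OF tree finH bij0 adj0 bij adj])
    show "{a,b} \<in> E" using Darc ab by simp
    show "b \<in> H" using H_eq ab by force
    show "\<sigma>0 b = a" using sigma0_arc ab by simp
    show "\<not> (a \<in> H \<and> \<sigma>0 a = b)" using not_back ab by simp
  qed
  show "{v\<in>H. \<sigma> v = v} \<subseteq> L"
  proof
    fix v assume v: "v \<in> {v\<in>H. \<sigma> v = v}"
    show "v \<in> L"
    proof (rule ccontr)
      assume "v \<notin> L"
      then obtain a where av: "(a,v) \<in> D" using v H_eq by force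
      then show False using arcs[OF av] v Darc(3)[OF av] by simp
    qed
  qed
  assume FL: "{v\<in>H. \<sigma> v = v} = L"
  show "\<forall>v\<in>H. \<sigma> v = \<sigma>0 v"
  proof
    fix v assume v: "v \<in> H"
    show "\<sigma> v = \<sigma>0 v"
    proof (cases "v \<in> L")
      case True then show ?thesis using FL sigma0_L by auto
    next
      case False
      then obtain a where av: "(a,v) \<in> D" using v H_eq by force
      then show ?thesis using arcs sigma0_arc by simp
    qed
  qed
qed

end



lemma bij_sorted: "finite X \<Longrightarrow> bij_betw ((!) (sorted_list_of_set X)) {..<card X} X"
  by (rule bij_betw_nth) (simp_all add: distinct_sorted_list_of_set set_sorted_list_of_set length_sorted_list_of_set)

lemma var_nonzero: "var u \<noteq> 0"
  unfolding var_def by (metis Poly_Mapping.lookup_single_eq Poly_Mapping.lookup_zero one_neq_zero)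

lemma Lmat_nz: "Lmat E v w \<noteq> 0 \<longleftrightarrow> v = w \<or> {v, w} \<in> E"
  unfolding Lmat_def by (simp add: var_nonzero)

lemma prod_bad:
  assumes "finite H" "\<not> (\<forall>r\<in>H. \<sigma> r = r \<or> {r, \<sigma> r} \<in> E)"
  shows "(\<Prod>v\<in>H. Lmat E v (\<sigma> v)) = 0"
proof (rule prod_zero[OF assms(1)])
  obtain r where "r \<in> H" "\<not> (\<sigma> r = r \<or> {r, \<sigma> r} \<in> E)" using assms(2) by blast
  moreover have "Lmat E r (\<sigma> r) = 0"
    using Lmat_nz[of E r "\<sigma> r"] \<open>\<not> (\<sigma> r = r \<or> {r, \<sigma> r} \<in> E)\<close> by auto
  ultimately show "\<exists>a\<in>H. Lmat E a (\<sigma> a) = 0" by blast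
qed

lemma prod_good:
  assumes fin: "finite H" and adj: "\<forall>r\<in>H. \<sigma> r = r \<or> {r, \<sigma> r} \<in> E"
  shows "(\<Prod>v\<in>H. Lmat E v (\<sigma> v)) = (-1) ^ card (H - {v\<in>H. \<sigma> v = v}) * var_prod {v\<in>H. \<sigma> v = v}"
proof -
  have "(\<Prod>v\<in>H. Lmat E v (\<sigma> v)) = (\<Prod>v\<in>H. if \<sigma> v = v then var v else -1)"
  proof (rule prod.cong)
    fix v assume v: "v \<in> H"
    show "Lmat E v (\<sigma> v) = (if \<sigma> v = v then var v else -1)"
    proof (cases "\<sigma> v = v")
      case True then show ?thesis unfolding Lmat_def by simp
    next
      case False
      then have "{v, \<sigma> v} \<in> E" using adj v by auto
      then show ?thesis using False unfolding Lmat_def by auto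
    qed
  qed simp
  also have "\<dots> = (\<Prod>v\<in>H \<inter> {v. \<sigma> v = v}. var v) * (\<Prod>v\<in>H \<inter> - {v. \<sigma> v = v}. -1)"
    by (rule prod.If_cases[OF fin])
  also have "H \<inter> {v. \<sigma> v = v} = {v\<in>H. \<sigma> v = v}" by auto
  also have "H \<inter> - {v. \<sigma> v = v} = H - {v\<in>H. \<sigma> v = v}" by auto
  finally show ?thesis unfolding var_prod_def by (simp add: mult.commute)
qed

lemma pm1_mult: "(x::'b::comm_ring_1) \<in> {1, -1} \<Longrightarrow> y \<in> {1, -1} \<Longrightarrow> x * y \<in> {1, -1}"
  by auto

lemma pm1_power: "((-1::'b::comm_ring_1) ^ k) \<in> {1, -1}"
  by (cases "even k") auto

lemma pm1_signof: "(signof p :: 'b::comm_ring_1) \<in> {1, -1}"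
  by (cases p rule: sign_cases) auto

context lsetup
begin

definition "n = card H"
definition "hs = sorted_list_of_set H"
definition "ts = sorted_list_of_set T"
definition "ihs = the_inv_into {..<n} ((!) hs)"
definition "its = the_inv_into {..<n} ((!) ts)"
definition "sig p v = ts ! p (ihs v)"
definition "p0 i = (if i < n then its (\<sigma>0 (hs ! i)) else i)"

lemma finT: "finite T" using T_eq finD finL by simp
lemma cardT: "card T = n" unfolding n_def using bij_betw_same_card[OF bij0] by simp
lemma bij_hs: "bij_betw ((!) hs) {..<n} H" unfolding hs_def n_def using bij_sorted[OF finH] .
lemma bij_ts: "bij_betw ((!) ts) {..<n} T" unfolding ts_def cardT[symmetric] using bij_sorted[OF finT] .
lemma bij_ihs: "bij_betw ihs H {..<n}" unfolding ihs_def by (rule bij_betw_the_inv_into[OF bij_hs])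
lemma bij_its: "bij_betw its T {..<n}" unfolding its_def by (rule bij_betw_the_inv_into[OF bij_ts])
lemma ihs_nth: "i < n \<Longrightarrow> ihs (hs ! i) = i"
  unfolding ihs_def using bij_hs by (simp add: bij_betw_def the_inv_into_f_f)
lemma its_nth: "i < n \<Longrightarrow> its (ts ! i) = i"
  unfolding its_def using bij_ts by (simp add: bij_betw_def the_inv_into_f_f)
lemma ts_its: "v \<in> T \<Longrightarrow> ts ! (its v) = v"
  unfolding its_def using bij_ts by (rule f_the_inv_into_f_bij_betw)

lemma sig_bij: assumes p: "p permutes {0..<n}" shows "bij_betw (sig p) H T"
proof -
  have "bij_betw p {..<n} {..<n}" using permutes_imp_bij[OF p] by (simp add: atLeast0LessThan)
  then have "bij_betw (p \<circ> ihs) H {..<n}" by (rule bij_betw_trans[OF bij_ihs])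
  then have "bij_betw ((!) ts \<circ> (p \<circ> ihs)) H T" by (rule bij_betw_trans[OF _ bij_ts])
  moreover have "(!) ts \<circ> (p \<circ> ihs) = sig p" unfolding sig_def by auto
  ultimately show ?thesis by simp
qed

lemma p0_perm: "p0 permutes {0..<n}"
proof (rule bij_imp_permutes)
  have "bij_betw (its \<circ> (\<sigma>0 \<circ> (!) hs)) {..<n} {..<n}"
    by (rule bij_betw_trans[OF bij_betw_trans[OF bij_hs bij0] bij_its])
  moreover have "bij_betw p0 {..<n} {..<n} = bij_betw (its \<circ> (\<sigma>0 \<circ> (!) hs)) {..<n} {..<n}"
    by (rule bij_betw_cong) (simp add: p0_def)
  ultimately have "bij_betw p0 {..<n} {..<n}" by simp
  then show "bij_betw p0 {0..<n} {0..<n}" by (simp add: atLeast0LessThan)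
  show "\<And>x. x \<notin> {0..<n} \<Longrightarrow> p0 x = x" unfolding p0_def by simp
qed

lemma sig_p0: "v \<in> H \<Longrightarrow> sig p0 v = \<sigma>0 v"
proof -
  assume v: "v \<in> H"
  have i: "ihs v < n" using bij_ihs v by (auto simp: bij_betw_def)
  have hv: "hs ! ihs v = v" unfolding ihs_def using bij_hs v by (rule f_the_inv_into_f_bij_betw)
  have "\<sigma>0 v \<in> T" using bij0 v by (auto simp: bij_betw_def)
  then show ?thesis unfolding sig_def p0_def using i hv ts_its by simp
qed

lemma sig_eq_p0:
  assumes p: "p permutes {0..<n}" and eq: "\<forall>v\<in>H. sig p v = \<sigma>0 v"
  shows "p = p0"
proof
  fix i show "p i = p0 i"
  proof (cases "i < n")
    case True
    have "hs ! i \<in> H" using bij_hs True by (auto simp: bij_betw_def)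
    then have "ts ! (p i) = \<sigma>0 (hs ! i)" using eq True ihs_nth unfolding sig_def by force
    moreover have "p i < n" using p True permutes_in_image[OF p, of i] by simp
    ultimately show ?thesis unfolding p0_def using True its_nth by metis
  next
    case False
    then show ?thesis using p unfolding p0_def by (simp add: permutes_not_in)
  qed
qed

lemma det_expand:
  "sub_det E H T = (\<Sum>p\<in>{p. p permutes {0..<n}}. signof p * (\<Prod>v\<in>H. Lmat E v (sig p v)))"
proof -
  define f where "f = (\<lambda>(i, j). Lmat E (hs ! i) (ts ! j))"
  have "sub_det E H T = det (mat n n f)" unfolding sub_det_def f_def hs_def ts_def n_def
    using cardT n_def by simp
  also have "\<dots> = (\<Sum>p\<in>{p. p permutes {0..<n}}. signof p * (\<Prod>i=0..<n. mat n n f $$ (i, p i)))"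
    by (rule det_def'[OF mat_carrier])
  also have "\<dots> = (\<Sum>p\<in>{p. p permutes {0..<n}}. signof p * (\<Prod>v\<in>H. Lmat E v (sig p v)))"
  proof (rule sum.cong)
    fix p assume "p \<in> {p. p permutes {0..<n}}"
    then have p: "p permutes {0..<n}" by simp
    have "(\<Prod>i=0..<n. mat n n f $$ (i, p i)) = (\<Prod>i\<in>{..<n}. Lmat E (hs ! i) (sig p (hs ! i)))"
    proof (rule prod.cong)
      fix i assume "i \<in> {..<n}"
      then have i: "i < n" by simp
      then have "p i < n" using permutes_in_image[OF p, of i] by simp
      then show "mat n n f $$ (i, p i) = Lmat E (hs ! i) (sig p (hs ! i))"
        using i unfolding f_def sig_def by (simp add: ihs_nth)
    qed (simp add: atLeast0LessThan)
    also have "\<dots> = (\<Prod>v\<in>H. Lmat E v (sig p v))"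
      by (rule prod.reindex_bij_betw[OF bij_hs, where g = "\<lambda>v. Lmat E v (sig p v)"])
    finally show "signof p * (\<Prod>i=0..<n. mat n n f $$ (i, p i)) = signof p * (\<Prod>v\<in>H. Lmat E v (sig p v))"
      by simp
  qed simp
  finally show ?thesis .
qed

end



context lsetup
begin

lemma lower_pm: "c \<in> {1, -1} \<Longrightarrow> finite F \<Longrightarrow> card F < d \<Longrightarrow> lower_deg (c * var_prod F) d"
proof -
  assume c: "c \<in> {1, -1}" and f: "finite F" "card F < d"
  have l: "lower_deg (var_prod F) d" using lower_deg_var_prod[OF f] .
  show ?thesis using c
  proof
    assume "c = 1" then show ?thesis using l by simp
  next
    assume "c \<in> {-1}" then show ?thesis using lower_deg_uminus[OF l] by simp
  qed
qed

lemma main: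
  "\<exists>p. lower_deg p (card L) \<and> (sub_det E H T = var_prod L + p \<or> sub_det E H T = - (var_prod L + p))"
proof -
  define P where "P = {p. p permutes {0..<n}}"
  define tm where "tm p = signof p * (\<Prod>v\<in>H. Lmat E v (sig p v))" for p
  have finP: "finite P" unfolding P_def by (rule finite_permutations) simp
  have p0P: "p0 \<in> P" unfolding P_def using p0_perm by simp
  have det: "sub_det E H T = tm p0 + (\<Sum>p\<in>P-{p0}. tm p)"
    using det_expand sum.remove[OF finP p0P, of tm] unfolding tm_def P_def by simp
  have adjp0: "\<forall>r\<in>H. sig p0 r = r \<or> {r, sig p0 r} \<in> E" using adj0 sig_p0 by simp
  have Fp0: "{v\<in>H. sig p0 v = v} = L"
  proof -
    have "{v\<in>H. sig p0 v = v} = {v\<in>H. \<sigma>0 v = v}" using sig_p0 by auto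
    moreover have "{v\<in>H. \<sigma>0 v = v} \<subseteq> L" by (rule good_sigma(1)[OF bij0 adj0])
    moreover have "L \<subseteq> {v\<in>H. \<sigma>0 v = v}" using H_eq sigma0_L by auto
    ultimately show ?thesis by blast
  qed
  define s :: "'a mpoly" where "s = signof p0 * (-1) ^ card (H - {v\<in>H. sig p0 v = v})"
  have s: "s \<in> {1, -1}" unfolding s_def by (rule pm1_mult[OF pm1_signof pm1_power])
  have lead: "tm p0 = s * var_prod L"
    unfolding tm_def s_def prod_good[OF finH adjp0] Fp0[symmetric] by (simp add: mult.assoc)
  have rest: "lower_deg (tm p) (card L)" if pP: "p \<in> P - {p0}" for p
  proof -
    have p: "p permutes {0..<n}" and pne: "p \<noteq> p0" using pP unfolding P_def by auto
    have bij: "bij_betw (sig p) H T" by (rule sig_bij[OF p])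
    show ?thesis
    proof (cases "\<forall>r\<in>H. sig p r = r \<or> {r, sig p r} \<in> E")
      case False
      then have "tm p = 0" unfolding tm_def using prod_bad[OF finH False] by simp
      then show ?thesis by simp
    next
      case adj: True
      define F where "F = {v\<in>H. sig p v = v}"
      have FL: "F \<subseteq> L" unfolding F_def by (rule good_sigma(1)[OF bij adj])
      have "F \<noteq> L"
      proof
        assume "F = L"
        then have "\<forall>v\<in>H. sig p v = \<sigma>0 v" using good_sigma(2)[OF bij adj] unfolding F_def by simp
        then have "p = p0" by (rule sig_eq_p0[OF p])
        then show False using pne by simp
      qed
      then have cF: "card F < card L" using FL finL by (simp add: psubset_card_mono)
      have finF: "finite F" using FL finL finite_subset by blast
      have "tm p = (signof p * (-1) ^ card (H - F)) * var_prod F"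
        unfolding tm_def prod_good[OF finH adj] F_def by (simp add: mult.assoc)
      moreover have "(signof p * (-1) ^ card (H - F) :: 'a mpoly) \<in> {1, -1}"
        by (rule pm1_mult[OF pm1_signof pm1_power])
      ultimately show ?thesis using lower_pm finF cF by simp
    qed
  qed
  define R where "R = (\<Sum>p\<in>P-{p0}. tm p)"
  have lR: "lower_deg R (card L)" unfolding R_def by (rule lower_deg_sum) (rule rest)
  show ?thesis
  proof (cases "s = 1")
    case True
    then have "sub_det E H T = var_prod L + R" using det lead R_def by simp
    then show ?thesis using lR by blast
  next
    case False
    then have "s = -1" using s by simp
    then have "sub_det E H T = - (var_prod L + (- R))" using det lead R_def by simp
    then show ?thesis using lower_deg_uminus[OF lR] by blast
  qed
qed

end

theorem lemma3p2:
  fixes V :: "'a::linorder set" and E :: "'a set set" and M :: "'a set set"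
    and D :: "('a \<times> 'a) set"
  assumes "is_tree V E"
    and "two_matching V E M"
    and "path_orientation E M D"
  shows "\<exists>p. lower_deg p (card (loops_of V M)) \<and>
    (sub_det E (heads V M D) (tails V M D) = var_prod (loops_of V M) + p \<or>
     sub_det E (heads V M D) (tails V M D) = - (var_prod (loops_of V M) + p))"
proof -
  interpret lsetup V E M D using assms by unfold_locales
  show ?thesis using main unfolding L_def H_def T_def .
qed

end
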